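(* Let $\mathcal{M}=(E,\rho)$ be a $q$-matroid and $\mathcal{Z}=\mathcal{Z}(\mathcal{M})$. Then for all subspaces $V\le E$, \[ \rho(V)=\min_{Z\in\mathcal{Z}}\Big(\rho(Z)+\dim\big((V+Z)/Z\big)\Big). \]
   Context: Let $\mathbb{F}=\mathbb{F}_q$, $E$ a finite-dimensional $\mathbb{F}$-vector space. A $q$-matroid is $\mathcal{M}=(E,\rho)$ with $\rho$ from subspaces of $E$ to $\mathbb{Z}_{\ge0}$ satisfying $0\le\rho(V)\le\dim V$, monotonicity, and submodularity $\rho(V+W)+\rho(V\cap W)\le\rho(V)+\rho(W)$. A flat is $F$ with $\rho(F+\langle x\rangle)>\rho(F)$ for all $x\in E\setminus F$. The cyclic core is $\mathrm{cyc}(V)=\{x\in V\mid\rho(W)=\rho(V)\text{ for all }W\le V\text{ with }W+\langle x\rangle=V\}$; $V$ is cyclic if $\mathrm{cyc}(V)=V$. $\mathcal{Z}(\mathcal{M})$ is the set of cyclic flats. *)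

theory Defs
  imports "HOL-Analysis.Analysis"
begin

text \<open>The ambient space E is modelled as F^n, i.e. the type 'a^'n with 'a a finite field
  (every finite field is some F_q) and 'n a finite index type.\<close>

definition qsub :: "('a::field ^ 'n) set \<Rightarrow> bool" where
  "qsub V \<longleftrightarrow> vec.subspace V"

definition ssum :: "('a::field ^ 'n) set \<Rightarrow> ('a ^ 'n) set \<Rightarrow> ('a ^ 'n) set" where
  "ssum V W = {v + w | v w. v \<in> V \<and> w \<in> W}"

definition qmatroid :: "(('a::{finite,field} ^ 'n) set \<Rightarrow> nat) \<Rightarrow> bool" where
  "qmatroid \<rho> \<longleftrightarrow>
     (\<forall>V. qsub V \<longrightarrow> \<rho> V \<le> vec.dim V) \<and>
     (\<forall>V W. qsub V \<and> qsub W \<and> V \<subseteq> W \<longrightarrow> \<rho> V \<le> \<rho> W) \<and>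
     (\<forall>V W. qsub V \<and> qsub W \<longrightarrow> \<rho> (ssum V W) + \<rho> (V \<inter> W) \<le> \<rho> V + \<rho> W)"

definition qflat :: "(('a::field ^ 'n) set \<Rightarrow> nat) \<Rightarrow> ('a ^ 'n) set \<Rightarrow> bool" where
  "qflat \<rho> F \<longleftrightarrow> qsub F \<and> (\<forall>x. x \<notin> F \<longrightarrow> \<rho> (ssum F (vec.span {x})) > \<rho> F)"

definition cyc :: "(('a::field ^ 'n) set \<Rightarrow> nat) \<Rightarrow> ('a ^ 'n) set \<Rightarrow> ('a ^ 'n) set" where
  "cyc \<rho> V = {x \<in> V. \<forall>W. qsub W \<and> W \<subseteq> V \<and> ssum W (vec.span {x}) = V \<longrightarrow> \<rho> W = \<rho> V}"

definition qcyclic :: "(('a::field ^ 'n) set \<Rightarrow> nat) \<Rightarrow> ('a ^ 'n) set \<Rightarrow> bool" where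
  "qcyclic \<rho> V \<longleftrightarrow> qsub V \<and> cyc \<rho> V = V"

definition cyclic_flats :: "(('a::field ^ 'n) set \<Rightarrow> nat) \<Rightarrow> ('a ^ 'n) set set" where
  "cyclic_flats \<rho> = {Z. qcyclic \<rho> Z \<and> qflat \<rho> Z}"

end

theory Submission
  imports Defs
begin

lemma qsub_span_eq: "qsub V \<Longrightarrow> vec.span V = V"
  unfolding qsub_def using vec.span_eq_iff by blast

lemma ssum_span:
  assumes "qsub V" "qsub W"
  shows "ssum V W = vec.span (V \<union> W)"
proof -
  have e: "vec.span V = V" "vec.span W = W" using assms qsub_span_eq by auto
  show ?thesis unfolding ssum_def vec.span_Un e by (rule refl)
qed

lemma ssum_span1:
  assumes "qsub V"
  shows "ssum V (vec.span {x}) = vec.span (insert x V)"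
proof -
  have e: "vec.span V = V" using assms qsub_span_eq by auto
  show ?thesis unfolding ssum_def using vec.span_Un[of V "{x}"] unfolding e by simp
qed

lemma qsub_span[simp]: "qsub (vec.span S)"
  unfolding qsub_def by simp

lemma unit_incr:
  assumes "qmatroid \<rho>" "qsub B"
  shows "\<rho> (vec.span (insert x B)) \<le> \<rho> B + 1"
proof -
  have "\<rho> (ssum B (vec.span {x})) + \<rho> (B \<inter> vec.span {x}) \<le> \<rho> B + \<rho> (vec.span {x})"
    using assms unfolding qmatroid_def by auto
  moreover have "\<rho> (vec.span {x}) \<le> vec.dim (vec.span {x})"
    using assms(1) qsub_span unfolding qmatroid_def by blast
  moreover have "vec.dim (vec.span {x}) \<le> 1"
    using vec.dim_insert[of x "{}"] by (simp split: if_splits)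
  ultimately have "\<rho> (ssum B (vec.span {x})) \<le> \<rho> B + 1" by linarith
  then show ?thesis using ssum_span1[OF assms(2)] by simp
qed

lemma rank_bound_ind:
  assumes "qmatroid \<rho>" "qsub A"
  shows "\<And>B. qsub B \<Longrightarrow> B \<subseteq> A \<Longrightarrow> vec.dim A - vec.dim B = n \<Longrightarrow>
     \<rho> A \<le> \<rho> B + (vec.dim A - vec.dim B)"
proof (induction n)
  case 0
  then have "vec.dim A \<le> vec.dim B" by simp
  then have "A = B" using 0 assms vec.subspace_dim_equal unfolding qsub_def by blast
  then show ?case by simp
next
  case (Suc n)
  then have "A \<noteq> B" by auto
  then obtain x where x: "x \<in> A" "x \<notin> B" using Suc by blast
  define B' where "B' = vec.span (insert x B)"
  have sB: "vec.span B = B" using Suc.prems qsub_span_eq by blast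
  have dB': "vec.dim B' = vec.dim B + 1"
    unfolding B'_def vec.dim_span vec.dim_insert sB using x by simp
  have B'A: "B' \<subseteq> A" unfolding B'_def
    using vec.span_minimal[of "insert x B" A] x Suc.prems assms unfolding qsub_def by auto
  have "\<rho> A \<le> \<rho> B' + (vec.dim A - vec.dim B')"
  proof -
    have "vec.dim A - vec.dim B' = n" using dB' Suc.prems by simp
    moreover have "qsub B'" unfolding B'_def by simp
    ultimately show ?thesis using Suc.IH[of B'] B'A by blast
  qed
  moreover have "\<rho> B' \<le> \<rho> B + 1" unfolding B'_def using unit_incr assms Suc.prems by blast
  moreover have "vec.dim B' \<le> vec.dim A" using B'A vec.dim_subset by blast
  ultimately show ?case using dB' by simp
qed

lemma rank_bound:
  assumes "qmatroid \<rho>" "qsub A" "qsub B" "B \<subseteq> A"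
  shows "\<rho> A \<le> \<rho> B + (vec.dim A - vec.dim B)"
  using rank_bound_ind[OF assms(1,2) assms(3,4)] by blast

lemma lower:
  assumes "qmatroid \<rho>" "qsub V" "qsub Z"
  shows "\<rho> V \<le> \<rho> Z + (vec.dim (ssum V Z) - vec.dim Z)"
proof -
  have e: "ssum V Z = vec.span (V \<union> Z)" using ssum_span assms by blast
  have "V \<subseteq> ssum V Z" "Z \<subseteq> ssum V Z" unfolding e using vec.span_superset[of "V \<union> Z"] by auto
  then have "\<rho> V \<le> \<rho> (ssum V Z)" using assms unfolding qmatroid_def e by auto
  also have "\<dots> \<le> \<rho> Z + (vec.dim (ssum V Z) - vec.dim Z)"
  proof -
    have "qsub (ssum V Z)" using e by simp
    then show ?thesis using rank_bound[OF assms(1) _ assms(3)] \<open>Z \<subseteq> ssum V Z\<close> by blast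
  qed
  finally show ?thesis .
qed

lemma dim_le_ssum:
  assumes "qsub V" "qsub Z"
  shows "vec.dim Z \<le> vec.dim (ssum V Z)"
  using ssum_span[OF assms] vec.dim_subset vec.span_superset[of "V \<union> Z"] by (metis Un_subset_iff)

theorem corollary4p6:
  fixes \<rho> :: "('a::{finite,field} ^ 'n) set \<Rightarrow> nat" and V :: "('a ^ 'n) set"
  assumes "qmatroid \<rho>" and "qsub V"
  shows "\<rho> V = Min ((\<lambda>Z. \<rho> Z + (vec.dim (ssum V Z) - vec.dim Z)) ` cyclic_flats \<rho>)"
proof -
  define f where "f Z = \<rho> Z + (vec.dim (ssum V Z) - vec.dim Z)" for Z
  have low: "\<And>Z. qsub Z \<Longrightarrow> \<rho> V \<le> f Z" unfolding f_def using lower assms by blast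
  have mono: "\<And>A B. qsub A \<Longrightarrow> qsub B \<Longrightarrow> A \<subseteq> B \<Longrightarrow> \<rho> A \<le> \<rho> B"
    using assms(1) unfolding qmatroid_def by blast
  define S1 where "S1 = {Z. qsub Z \<and> f Z = \<rho> V}"
  have "ssum V V = V" using ssum_span[OF assms(2) assms(2)] qsub_span_eq[OF assms(2)] by simp
  then have VS1: "V \<in> S1" unfolding S1_def f_def using assms(2) by simp
  have fin1: "finite S1" by simp
  define r where "r = Min (\<rho> ` S1)"
  define S2 where "S2 = {Z \<in> S1. \<rho> Z = r}"
  have "r \<in> \<rho> ` S1" unfolding r_def using fin1 VS1 by (intro Min_in) auto
  then have S2ne: "S2 \<noteq> {}" unfolding S2_def by auto
  have rmin: "\<And>Z. Z \<in> S1 \<Longrightarrow> r \<le> \<rho> Z" unfolding r_def using fin1 by simp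
  have fin2: "finite S2" by simp
  define d where "d = Max (vec.dim ` S2)"
  have "d \<in> vec.dim ` S2" unfolding d_def using fin2 S2ne by (intro Max_in) auto
  then obtain Z where ZS2: "Z \<in> S2" and dZ: "vec.dim Z = d" by auto
  have dmax: "\<And>Y. Y \<in> S2 \<Longrightarrow> vec.dim Y \<le> d" unfolding d_def using fin2 by simp
  have qZ: "qsub Z" and fZ: "f Z = \<rho> V" and rZ: "\<rho> Z = r" using ZS2 unfolding S2_def S1_def by auto
  have eZ: "ssum V Z = vec.span (V \<union> Z)" using ssum_span[OF assms(2) qZ] .
  have sZ: "vec.span Z = Z" using qsub_span_eq[OF qZ] .
  have flat: "qflat \<rho> Z"
    unfolding qflat_def
  proof (intro conjI allI impI qZ)
    fix x assume xZ: "x \<notin> Z"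
    show "\<rho> Z < \<rho> (ssum Z (vec.span {x}))"
    proof (rule ccontr)
      assume nt: "\<not> ?thesis"
      define Z' where "Z' = vec.span (insert x Z)"
      have rZ': "\<rho> Z' \<le> \<rho> Z" using nt ssum_span1[OF qZ] unfolding Z'_def by simp
      have qZ': "qsub Z'" unfolding Z'_def by simp
      have dZ': "vec.dim Z' = vec.dim Z + 1"
        unfolding Z'_def vec.dim_span vec.dim_insert sZ using xZ by simp
      have sub: "ssum V Z' \<subseteq> vec.span (insert x (ssum V Z))"
      proof -
        have "V \<union> Z' \<subseteq> vec.span (insert x (ssum V Z))"
        proof -
          have "V \<subseteq> ssum V Z" unfolding eZ using vec.span_superset[of "V \<union> Z"] by auto
          also have "\<dots> \<subseteq> vec.span (insert x (ssum V Z))"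
            using vec.span_superset[of "insert x (ssum V Z)"] by auto
          finally have 1: "V \<subseteq> vec.span (insert x (ssum V Z))" .
          have "Z \<subseteq> ssum V Z" unfolding eZ using vec.span_superset[of "V \<union> Z"] by auto
          then have "insert x Z \<subseteq> insert x (ssum V Z)" by auto
          then have "Z' \<subseteq> vec.span (insert x (ssum V Z))" unfolding Z'_def by (rule vec.span_mono)
          with 1 show ?thesis by auto
        qed
        then show ?thesis unfolding ssum_span[OF assms(2) qZ']
          by (intro vec.span_minimal) auto
      qed
      have "vec.dim (ssum V Z') \<le> vec.dim (insert x (ssum V Z))"
        using vec.dim_subset[OF sub] by simp
      also have "\<dots> \<le> vec.dim (ssum V Z) + 1" unfolding vec.dim_insert by simp
      finally have dd: "vec.dim (ssum V Z') \<le> vec.dim (ssum V Z) + 1" .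
      have "vec.dim Z' \<le> vec.dim (ssum V Z')" using dim_le_ssum[OF assms(2) qZ'] .
      have "vec.dim Z \<le> vec.dim (ssum V Z)" using dim_le_ssum[OF assms(2) qZ] .
      have "f Z' \<le> f Z" unfolding f_def
        using rZ' dd dZ' \<open>vec.dim Z' \<le> vec.dim (ssum V Z')\<close> \<open>vec.dim Z \<le> vec.dim (ssum V Z)\<close> by linarith
      then have "f Z' = \<rho> V" using low[OF qZ'] fZ by simp
      then have "Z' \<in> S1" unfolding S1_def using qZ' by simp
      then have "\<rho> Z' = r" using rmin rZ' rZ by fastforce
      then have "Z' \<in> S2" using \<open>Z' \<in> S1\<close> unfolding S2_def by simp
      then show False using dmax dZ' dZ by fastforce
    qed
  qed
  have cyclic: "qcyclic \<rho> Z"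
    unfolding qcyclic_def
  proof (intro conjI qZ)
    show "cyc \<rho> Z = Z"
    proof
      show "cyc \<rho> Z \<subseteq> Z" unfolding cyc_def by auto
      show "Z \<subseteq> cyc \<rho> Z" unfolding cyc_def
      proof (intro subsetI CollectI conjI allI impI)
        fix x W assume xZ: "x \<in> Z" and W: "qsub W \<and> W \<subseteq> Z \<and> ssum W (vec.span {x}) = Z"
        then have qW: "qsub W" and WZ: "W \<subseteq> Z" and WZe: "vec.span (insert x W) = Z"
          using ssum_span1 by auto
        show "\<rho> W = \<rho> Z"
        proof (rule ccontr)
          assume "\<rho> W \<noteq> \<rho> Z"
          with mono[OF qW qZ WZ] have lt: "\<rho> W < \<rho> Z" by simp
          have "vec.dim Z \<le> vec.dim W + 1"
            using vec.dim_insert[of x W] WZe vec.dim_span[of "insert x W"] by (simp split: if_splits)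
          moreover have "vec.dim (ssum V W) \<le> vec.dim (ssum V Z)"
            unfolding ssum_span[OF assms(2) qW] eZ using WZ
            by (intro vec.dim_subset vec.span_mono) auto
          moreover have "vec.dim W \<le> vec.dim (ssum V W)" using dim_le_ssum[OF assms(2) qW] .
          moreover have "vec.dim Z \<le> vec.dim (ssum V Z)" using dim_le_ssum[OF assms(2) qZ] .
          ultimately have "f W \<le> f Z" unfolding f_def using lt by linarith
          then have "f W = \<rho> V" using low[OF qW] fZ by simp
          then have "W \<in> S1" unfolding S1_def using qW by simp
          then show False using rmin lt rZ by fastforce
        qed
      qed
    qed
  qed
  have ZC: "Z \<in> cyclic_flats \<rho>" unfolding cyclic_flats_def using flat cyclic by simp
  have finC: "finite (cyclic_flats \<rho>)" by simp
  have "Min (f ` cyclic_flats \<rho>) = \<rho> V"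
  proof (rule Min_eqI)
    show "finite (f ` cyclic_flats \<rho>)" using finC by simp
    show "\<And>y. y \<in> f ` cyclic_flats \<rho> \<Longrightarrow> \<rho> V \<le> y"
      using low unfolding cyclic_flats_def qcyclic_def by auto
    show "\<rho> V \<in> f ` cyclic_flats \<rho>" using ZC fZ by force
  qed
  then show ?thesis unfolding f_def by simp
qed

end
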